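(* There exist constants $\eta>0$, $c>0$ and $N_0$ such that for every integer $N\geq N_0$ the following holds: if $\{0,1\}^N$ is partitioned into clusters such that whenever $u,v$ lie in the same cluster there are at most $\eta\cdot2^N$ points $w\in\{0,1\}^N$ with $d_H(u,w)\geq N/2$ and $d_H(v,w)\leq N/2-\sqrt N$, then the number of clusters is at least $2^{cN}$.
   Context: $d_H$ denotes the Hamming distance on $\{0,1\}^N$. *)

theory Defs
  imports Complex_Main "HOL-Library.Disjoint_Sets"
begin

text \<open>The cube {0,1}^N, a point being identified with its support, a subset of {0..<N}.\<close>
definition cube :: "nat \<Rightarrow> nat set set" where
  "cube N = Pow {..<N}"

definition hamming :: "nat set \<Rightarrow> nat set \<Rightarrow> nat" where
  "hamming u v = card ((u - v) \<union> (v - u))"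

end

theory Submission
  imports Defs
begin


lemma sum_Pow_insert:
  assumes "finite F" "a \<notin> F"
  shows "sum g (Pow (insert a F)) = (\<Sum>y\<in>Pow F. g y + g (insert a y))"
proof -
  have inj: "inj_on (insert a) (Pow F)" using assms(2) unfolding inj_on_def by (meson PowD in_mono insert_ident)
  have "sum g (Pow (insert a F)) = sum g (Pow F \<union> insert a ` Pow F)" by (simp add: Pow_insert)
  also have "\<dots> = sum g (Pow F) + sum g (insert a ` Pow F)"
    by (rule sum.union_disjoint) (use assms in auto)
  also have "sum g (insert a ` Pow F) = (\<Sum>y\<in>Pow F. g (insert a y))"
    using sum.reindex[OF inj] by simp
  finally show ?thesis by (simp add: sum.distrib)
qed

lemma card_insert_sub: "finite F \<Longrightarrow> a \<notin> F \<Longrightarrow> y \<in> Pow F \<Longrightarrow> card (insert a y) = card y + 1"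
proof -
  assume "finite F" "a \<notin> F" "y \<in> Pow F"
  then have "finite y" "a \<notin> y" by (auto dest: finite_subset)
  then show ?thesis by simp
qed

lemma moment2:
  assumes "finite B"
  shows "(\<Sum>y\<in>Pow B. (2*real(card y) - real(card B))^2) = real(card B) * 2^card B"
  using assms
proof (induction B rule: finite_induct)
  case empty then show ?case by simp
next
  case (insert a F)
  let ?n = "real (card F)"
  have "(\<Sum>y\<in>Pow (insert a F). (2*real(card y) - real(card (insert a F)))^2)
     = (\<Sum>y\<in>Pow F. 2*(2*real(card y) - ?n)^2 + 2)"
    unfolding sum_Pow_insert[OF insert(1,2)]
    by (rule sum.cong) (use insert in \<open>auto simp: card_insert_sub power2_eq_square algebra_simps dest: finite_subset\<close>)
  also have "\<dots> = 2 * (?n * 2^card F) + 2 * 2^card F"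
    by (simp add: sum.distrib sum_distrib_left[symmetric] insert.IH card_Pow[OF insert(1)])
  finally show ?case using insert by (simp add: algebra_simps)
qed

lemma moment4:
  assumes "finite B"
  shows "(\<Sum>y\<in>Pow B. (2*real(card y) - real(card B))^4) = (3*real(card B)^2 - 2*real(card B)) * 2^card B"
  using assms
proof (induction B rule: finite_induct)
  case empty then show ?case by simp
next
  case (insert a F)
  let ?n = "real (card F)"
  have "(\<Sum>y\<in>Pow (insert a F). (2*real(card y) - real(card (insert a F)))^4)
     = (\<Sum>y\<in>Pow F. 2*(2*real(card y) - ?n)^4 + 12 * (2*real(card y) - ?n)^2 + 2)"
    unfolding sum_Pow_insert[OF insert(1,2)]
    by (rule sum.cong) (use insert in \<open>auto simp: card_insert_sub power2_eq_square power4_eq_xxxx algebra_simps dest: finite_subset\<close>)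
  also have "\<dots> = 2 * ((3*?n^2 - 2*?n) * 2^card F) + 12 * (?n * 2^card F) + 2 * 2^card F"
    by (simp add: sum.distrib sum_distrib_left[symmetric] insert.IH moment2[OF insert(1)] card_Pow[OF insert(1)])
  finally show ?case using insert by (simp add: algebra_simps power2_eq_square)
qed

lemma weight3:
  assumes "finite S"
  shows "(\<Sum>z\<in>Pow S. (3::real)^(card S - card z)) = 4^card S"
  using assms
proof (induction S rule: finite_induct)
  case empty then show ?case by simp
next
  case (insert a F)
  have "(\<Sum>z\<in>Pow (insert a F). (3::real)^(card (insert a F) - card z)) = (\<Sum>z\<in>Pow F. 4 * 3^(card F - card z))"
    unfolding sum_Pow_insert[OF insert(1,2)]
  proof (rule sum.cong)
    fix z assume z: "z \<in> Pow F"
    then have "card z \<le> card F" using insert(1) by (simp add: card_mono)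
    then have "card F + 1 - card z = Suc (card F - card z)" by simp
    then show "(3::real)^(card (insert a F) - card z) + 3^(card (insert a F) - card (insert a z)) = 4 * 3^(card F - card z)"
      using insert z by (simp add: card_insert_sub)
  qed simp
  then show ?case using insert by (simp add: sum_distrib_left[symmetric])
qed




lemma compl_sym:
  assumes "finite B"
  shows "card {y\<in>Pow B. P (2*real(card y) - real(card B))} = card {y\<in>Pow B. P (-(2*real(card y) - real(card B)))}"
proof -
  have "bij_betw (\<lambda>y. B - y) {y\<in>Pow B. P (-(2*real(card y) - real(card B)))} {y\<in>Pow B. P (2*real(card y) - real(card B))}"
  proof (rule bij_betw_byWitness[where f' = "\<lambda>y. B - y"])
    show "\<forall>a\<in>{y \<in> Pow B. P (- (2 * real (card y) - real (card B)))}. B - (B - a) = a" by auto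
    show "\<forall>a'\<in>{y \<in> Pow B. P (2 * real (card y) - real (card B))}. B - (B - a') = a'" by auto
    have c: "y \<subseteq> B \<Longrightarrow> real (card (B - y)) = real (card B) - real (card y)" for y
      using assms by (simp add: card_Diff_subset finite_subset card_mono of_nat_diff)
    show "(\<lambda>y. B - y) ` {y \<in> Pow B. P (- (2 * real (card y) - real (card B)))} \<subseteq> {y \<in> Pow B. P (2 * real (card y) - real (card B))}"
    proof
      fix z assume "z \<in> (\<lambda>y. B - y) ` {y \<in> Pow B. P (- (2 * real (card y) - real (card B)))}"
      then obtain y where y: "y \<subseteq> B" "P (- (2 * real (card y) - real (card B)))" "z = B - y" by auto
      have eq: "2 * real (card z) - real (card B) = - (2 * real (card y) - real (card B))" using c[OF y(1)] y(3) by simp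
      have "P (2 * real (card z) - real (card B))" by (metis eq y(2))
      then show "z \<in> {y \<in> Pow B. P (2 * real (card y) - real (card B))}" using y by blast
    qed
    show "(\<lambda>y. B - y) ` {y \<in> Pow B. P (2 * real (card y) - real (card B))} \<subseteq> {y \<in> Pow B. P (- (2 * real (card y) - real (card B)))}"
    proof
      fix z assume "z \<in> (\<lambda>y. B - y) ` {y \<in> Pow B. P (2 * real (card y) - real (card B))}"
      then obtain y where y: "y \<subseteq> B" "P (2 * real (card y) - real (card B))" "z = B - y" by auto
      have eq: "- (2 * real (card z) - real (card B)) = (2 * real (card y) - real (card B))" using c[OF y(1)] y(3) by simp
      have "P (- (2 * real (card z) - real (card B)))" by (metis eq y(2))
      then show "z \<in> {y \<in> Pow B. P (- (2 * real (card y) - real (card B)))}" using y by blast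
    qed
  qed
  then show ?thesis by (simp add: bij_betw_same_card)
qed

lemma half_nonneg:
  assumes "finite B"
  shows "2 ^ card B \<le> 2 * real (card {y\<in>Pow B. 2*real(card y) - real(card B) \<ge> 0})"
proof -
  let ?f = "\<lambda>y. 2*real(card y) - real(card B)"
  have fin: "finite (Pow B)" using assms by simp
  have "card (Pow B) = card {y\<in>Pow B. ?f y \<ge> 0} + card {y\<in>Pow B. \<not> ?f y \<ge> 0}"
  proof -
    have "Pow B = {y\<in>Pow B. ?f y \<ge> 0} \<union> {y\<in>Pow B. \<not> ?f y \<ge> 0}" by blast
    then show ?thesis by (metis (no_types, lifting) card_Un_disjoint disjoint_iff fin finite_Un mem_Collect_eq)
  qed
  moreover have "card {y\<in>Pow B. \<not> ?f y \<ge> 0} = card {y\<in>Pow B. \<not> - ?f y \<ge> 0}"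
    using compl_sym[OF assms, of "\<lambda>t. \<not> t \<ge> 0"] by simp
  moreover have "card {y\<in>Pow B. \<not> - ?f y \<ge> 0} \<le> card {y\<in>Pow B. ?f y \<ge> 0}"
    by (rule card_mono) (use fin in auto)
  ultimately have "card (Pow B) \<le> 2 * card {y\<in>Pow B. ?f y \<ge> 0}" by linarith
  then show ?thesis using assms by (simp add: card_Pow) (metis of_nat_le_iff of_nat_mult of_nat_numeral of_nat_power)
qed




lemma PZ:
  fixes B :: "'a set"
  assumes "finite B" "card B \<ge> 1"
  shows "3 * 2 ^ card B \<le> 32 * real (card {y\<in>Pow B. 2*real(card y) - real(card B) \<ge> sqrt (card B)/2})"
proof -
  define n where "n = real (card B)"
  define f where "f = (\<lambda>y::'a set. 2*real(card y) - n)"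
  define T where "T = {y\<in>Pow B. (f y)^2 \<ge> n/4}"
  have npos: "n \<ge> 1" using assms(2) by (simp add: n_def)
  have fin: "finite (Pow B)" using assms by simp
  have p2: "card (Pow B) = (2::nat)^card B" using assms by (simp add: card_Pow)
  have M2: "(\<Sum>y\<in>Pow B. (f y)^2) = n * 2^card B" using moment2[OF assms(1)] by (simp add: f_def n_def)
  have M4: "(\<Sum>y\<in>Pow B. (f y)^4) = (3*n^2 - 2*n) * 2^card B" using moment4[OF assms(1)] by (simp add: f_def n_def)
  have TB: "T \<subseteq> Pow B" by (auto simp: T_def)
  have split: "(\<Sum>y\<in>Pow B. (f y)^2) = (\<Sum>y\<in>T. (f y)^2) + (\<Sum>y\<in>Pow B - T. (f y)^2)"
    using sum.subset_diff[OF TB fin] by (simp add: add.commute)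
  have "(\<Sum>y\<in>Pow B - T. (f y)^2) \<le> (\<Sum>y\<in>Pow B - T. n/4)"
    by (rule sum_mono) (auto simp: T_def)
  also have "\<dots> = real (card (Pow B - T)) * (n/4)" by simp
  also have "\<dots> \<le> 2^card B * (n/4)"
  proof -
    have "card (Pow B - T) \<le> card (Pow B)" using fin by (simp add: card_mono)
    then have "real (card (Pow B - T)) \<le> 2^card B" using p2 by (metis of_nat_le_iff of_nat_numeral of_nat_power)
    then show ?thesis using npos by (intro mult_right_mono) auto
  qed
  also have "2^card B * (n/4) = 1/4 * (n * 2^card B)" by simp
  finally have low: "(\<Sum>y\<in>T. (f y)^2) \<ge> 3/4 * n * 2^card B" using split M2 by linarith
  have pt: "(f y)^2 \<le> (f y)^4/(8*n) + 2*n" for y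
  proof -
    have "0 \<le> ((f y)^2 - 4*n)^2" by simp
    then have "8*n*(f y)^2 \<le> (f y)^4 + 16*n^2" by (simp add: power2_eq_square power4_eq_xxxx algebra_simps)
    then show ?thesis using npos by (simp add: field_simps power2_eq_square)
  qed
  have "(\<Sum>y\<in>T. (f y)^2) \<le> (\<Sum>y\<in>T. (f y)^4/(8*n) + 2*n)" by (rule sum_mono) (rule pt)
  also have "\<dots> = (\<Sum>y\<in>T. (f y)^4)/(8*n) + 2*n*real(card T)" by (simp add: sum.distrib sum_divide_distrib)
  also have "(\<Sum>y\<in>T. (f y)^4) \<le> (\<Sum>y\<in>Pow B. (f y)^4)"
    by (rule sum_mono2[OF fin TB]) simp
  finally have "3/4 * n * 2^card B \<le> ((3*n^2 - 2*n) * 2^card B)/(8*n) + 2*n*real(card T)"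
    using low M4 npos by (smt (verit, ccfv_SIG) divide_right_mono)
  also have "((3*n^2 - 2*n) * 2^card B)/(8*n) \<le> 3/8 * n * 2^card B"
    using npos by (simp add: field_simps power2_eq_square)
  finally have "3/8 * n * 2^card B \<le> 2*n*real(card T)" by simp
  then have Tb: "3/16 * 2^card B \<le> real (card T)" using npos by (simp add: field_simps)
  define Tp where "Tp = {y\<in>Pow B. f y \<ge> sqrt n/2}"
  define Tm where "Tm = {y\<in>Pow B. - f y \<ge> sqrt n/2}"
  have "T \<subseteq> Tp \<union> Tm"
  proof
    fix y assume y: "y \<in> T"
    then have "n/4 \<le> (f y)^2" by (auto simp: T_def)
    then have "sqrt (n/4) \<le> sqrt ((f y)^2)" by (rule real_sqrt_le_mono)
    then have "sqrt n / 2 \<le> \<bar>f y\<bar>" by (simp add: real_sqrt_divide)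
    then show "y \<in> Tp \<union> Tm" using y by (auto simp: Tp_def Tm_def T_def abs_if split: if_splits)
  qed
  then have "card T \<le> card Tp + card Tm"
    by (metis card_Un_le card_mono fin Tp_def finite_Un finite_subset mem_Collect_eq subsetI Tm_def  le_trans)
  moreover have "card Tm = card Tp"
    unfolding Tm_def Tp_def f_def n_def using compl_sym[OF assms(1), of "\<lambda>t. t \<ge> sqrt (real (card B))/2"] by simp
  ultimately have "real (card T) \<le> 2 * real (card Tp)" by simp
  with Tb show ?thesis by (simp add: Tp_def f_def n_def)
qed




lemma combine:
  assumes "finite A" "finite B" "A \<inter> B = {}"
    and G: "G \<subseteq> {x\<in>Pow A. 2*real(card x) - real(card A) \<ge> \<alpha>}"
    and H: "H \<subseteq> {x\<in>Pow B. 2*real(card x) - real(card B) \<ge> \<beta>}"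
  shows "real (card G) * real (card H) \<le> real (card {z\<in>Pow (A\<union>B). 2*real(card z) - real(card (A\<union>B)) \<ge> \<alpha>+\<beta>})"
proof -
  let ?g = "\<lambda>(x,y). x \<union> (y::'a set)"
  have inj: "inj_on ?g (G \<times> H)"
  proof (rule inj_onI)
    fix p q assume p: "p \<in> G \<times> H" and q: "q \<in> G \<times> H" and e: "?g p = ?g q"
    obtain x y where "p = (x,y)" by force
    obtain x' y' where "q = (x',y')" by force
    have "x \<subseteq> A" "y \<subseteq> B" "x' \<subseteq> A" "y' \<subseteq> B" using p q G H \<open>p = (x,y)\<close> \<open>q = (x',y')\<close> by auto
    moreover have e': "x \<union> y = x' \<union> y'" using e \<open>p = (x,y)\<close> \<open>q = (x',y')\<close> by simp
    ultimately have "x = x'" "y = y'" using assms(3) by blast+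
    then show "p = q" using \<open>p = (x,y)\<close> \<open>q = (x',y')\<close> by simp
  qed
  have sub: "?g ` (G \<times> H) \<subseteq> {z\<in>Pow (A\<union>B). 2*real(card z) - real(card (A\<union>B)) \<ge> \<alpha>+\<beta>}"
  proof
    fix z assume "z \<in> ?g ` (G \<times> H)"
    then obtain x y where xy: "x \<in> G" "y \<in> H" "z = x \<union> y" by auto
    have xa: "x \<subseteq> A" and yb: "y \<subseteq> B" using xy G H by auto
    have "finite x" "finite y" "x \<inter> y = {}" using xa yb assms(1-3) finite_subset by auto
    then have cz: "card z = card x + card y" using xy(3) by (simp add: card_Un_disjoint)
    have cab: "card (A\<union>B) = card A + card B" using assms(1-3) by (simp add: card_Un_disjoint)
    have i1: "2*real(card x) - real(card A) \<ge> \<alpha>" and i2: "2*real(card y) - real(card B) \<ge> \<beta>" using xy G H by auto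
    have "real (card z) = real (card x) + real (card y)" using cz by simp
    moreover have "real (card (A\<union>B)) = real (card A) + real (card B)" using cab by simp
    ultimately have "2*real(card z) - real(card (A\<union>B)) \<ge> \<alpha>+\<beta>" using i1 i2 by linarith
    moreover have "z \<subseteq> A \<union> B" using xa yb xy(3) by blast
    ultimately show "z \<in> {z\<in>Pow (A\<union>B). 2*real(card z) - real(card (A\<union>B)) \<ge> \<alpha>+\<beta>}" by simp
  qed
  let ?S = "{z\<in>Pow (A\<union>B). 2*real(card z) - real(card (A\<union>B)) \<ge> \<alpha>+\<beta>}"
  have c1: "card (?g ` (G \<times> H)) = card (G \<times> H)" by (rule card_image[OF inj])
  have c2: "card (G \<times> H) = card G * card H" by (rule card_cartesian_product)
  have f0: "finite (Pow (A\<union>B))" using assms(1,2) by blast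
  have "?S \<subseteq> Pow (A\<union>B)" by blast
  then have fS: "finite ?S" using f0 by (rule finite_subset)
  have "card (?g ` (G \<times> H)) \<le> card ?S" by (rule card_mono[OF fS sub])
  then have "card G * card H \<le> card ?S" using c1 c2 by simp
  then have "real (card G * card H) \<le> real (card ?S)" by (rule of_nat_mono)
  then show ?thesis by simp
qed

lemma blocks:
  fixes b :: nat
  assumes "b \<ge> 1"
  shows "\<forall>D::'a set. finite D \<and> card D = m*b \<longrightarrow>
     (3/32)^m * 2^(m*b) \<le> real (card {x\<in>Pow D. 2*real(card x) - real(card D) \<ge> real m * sqrt b/2})"
proof (induction m)
  case 0
  then show ?case by (auto simp: card_eq_0_iff)
next
  case (Suc m)
  show ?case
  proof (intro allI impI)
    fix D :: "'a set" assume D: "finite D \<and> card D = Suc m * b"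
    obtain B where B: "B \<subseteq> D" "card B = b" using D obtain_subset_with_card_n[of b D] by auto
    define D' where "D' = D - B"
    have fD': "finite D'" "card D' = m*b" using D B by (auto simp: D'_def card_Diff_subset finite_subset)
    have fB: "finite B" using B D finite_subset by auto
    have IH: "(3/32)^m * 2^(m*b) \<le> real (card {x\<in>Pow D'. 2*real(card x) - real(card D') \<ge> real m * sqrt b/2})"
      using Suc.IH fD' by blast
    have P: "3 * 2 ^ b \<le> 32 * real (card {y\<in>Pow B. 2*real(card y) - real(card B) \<ge> sqrt (card B)/2})"
      using PZ[OF fB] B assms by simp
    have un: "D' \<union> B = D" using B by (auto simp: D'_def)
    have c: "real (card {x\<in>Pow D'. 2*real(card x) - real(card D') \<ge> real m * sqrt b/2}) *
             real (card {y\<in>Pow B. 2*real(card y) - real(card B) \<ge> sqrt (card B)/2})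
       \<le> real (card {z\<in>Pow (D'\<union>B). 2*real(card z) - real(card (D'\<union>B)) \<ge> real m * sqrt b/2 + sqrt (card B)/2})"
      by (rule combine) (use fD' fB in \<open>auto simp: D'_def\<close>)
    have "(3/32::real)^Suc m * 2^(Suc m*b) = ((3/32)^m * 2^(m*b)) * ((3/32) * 2^b)"
      by (simp add: power_add algebra_simps)
    also have "\<dots> \<le> real (card {x\<in>Pow D'. 2*real(card x) - real(card D') \<ge> real m * sqrt b/2}) *
             real (card {y\<in>Pow B. 2*real(card y) - real(card B) \<ge> sqrt (card B)/2})"
      by (rule mult_mono) (use IH P in auto)
    also have "\<dots> \<le> real (card {x\<in>Pow D. 2*real(card x) - real(card D) \<ge> real (Suc m) * sqrt b/2})"
    proof -
      have eqc: "real m * sqrt b/2 + sqrt (real (card B))/2 = real (Suc m) * sqrt b/2" using B(2) by (simp add: field_simps)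
      show ?thesis using c unfolding un eqc .
    qed
    finally show "(3/32)^Suc m * 2^(Suc m*b) \<le> real (card {x\<in>Pow D. 2*real(card x) - real(card D) \<ge> real (Suc m) * sqrt b/2})" .
  qed
qed




lemma anti:
  fixes D :: "'a set"
  assumes "finite D" "card D \<ge> 1024"
  shows "(3/32)^1024/2 * 2^card D \<le> real (card {x\<in>Pow D. 2*real(card x) - real(card D) \<ge> 8*sqrt(card D)})"
proof -
  define d where "d = card D"
  define b where "b = d div 1024"
  have b1: "b \<ge> 1" using assms(2) by (simp add: b_def d_def)
  have db: "1024*b \<le> d" "d \<le> 2048*b" using b1 by (auto simp: b_def)
  obtain D1 where D1: "D1 \<subseteq> D" "card D1 = 1024*b" using obtain_subset_with_card_n[of "1024*b" D] db d_def by auto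
  define R where "R = D - D1"
  have fD1: "finite D1" using D1 assms finite_subset by blast
  have fR: "finite R" using assms by (simp add: R_def)
  have cR: "card R = d - 1024*b" using D1 fD1 by (simp add: R_def card_Diff_subset d_def)
  have G: "(3/32)^1024 * 2^(1024*b) \<le> real (card {x\<in>Pow D1. 2*real(card x) - real(card D1) \<ge> real (1024::nat) * sqrt b/2})"
    using blocks[OF b1, of 1024] fD1 D1 by blast
  have H: "2 ^ card R \<le> 2 * real (card {y\<in>Pow R. 2*real(card y) - real(card R) \<ge> 0})"
    by (rule half_nonneg[OF fR])
  have un: "D1 \<union> R = D" using D1 by (auto simp: R_def)
  have c: "real (card {x\<in>Pow D1. 2*real(card x) - real(card D1) \<ge> real (1024::nat) * sqrt b/2}) *
           real (card {y\<in>Pow R. 2*real(card y) - real(card R) \<ge> 0})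
      \<le> real (card {z\<in>Pow (D1 \<union> R). 2*real(card z) - real(card (D1\<union>R)) \<ge> real (1024::nat) * sqrt b/2 + 0})"
    by (rule combine) (use fD1 fR in \<open>auto simp: R_def\<close>)
  have "sqrt (real d) \<le> sqrt (4096 * real b)" using db by (intro real_sqrt_le_mono) simp
  also have "\<dots> = 64 * sqrt (real b)" by (simp add: real_sqrt_mult)
  finally have sq: "8 * sqrt (real d) \<le> real (1024::nat) * sqrt b/2" by simp
  have fP: "finite (Pow D)" using assms by simp
  have sub: "{z\<in>Pow D. 2*real(card z) - real(card D) \<ge> real (1024::nat) * sqrt b/2 + 0} \<subseteq> {x\<in>Pow D. 2*real(card x) - real(card D) \<ge> 8*sqrt(card D)}"
    using sq by (auto simp: d_def)
  have "card {z\<in>Pow D. 2*real(card z) - real(card D) \<ge> real (1024::nat) * sqrt b/2 + 0} \<le> card {x\<in>Pow D. 2*real(card x) - real(card D) \<ge> 8*sqrt(card D)}"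
    by (rule card_mono[OF _ sub]) (use fP in simp)
  then have mono: "real (card {z\<in>Pow D. 2*real(card z) - real(card D) \<ge> real (1024::nat) * sqrt b/2 + 0}) \<le> real (card {x\<in>Pow D. 2*real(card x) - real(card D) \<ge> 8*sqrt(card D)})"
    by (rule of_nat_mono)
  have "(3/32::real)^1024/2 * 2^card D = ((3/32)^1024 * 2^(1024*b)) * (2^card R / 2)"
    using cR db by (simp add: d_def power_add[symmetric])
  also have "\<dots> \<le> real (card {x\<in>Pow D1. 2*real(card x) - real(card D1) \<ge> real (1024::nat) * sqrt b/2}) *
           real (card {y\<in>Pow R. 2*real(card y) - real(card R) \<ge> 0})"
    by (rule mult_mono) (use G H in auto)
  also have "\<dots> \<le> real (card {x\<in>Pow D. 2*real(card x) - real(card D) \<ge> 8*sqrt(card D)})"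
    using c mono unfolding un by linarith
  finally show ?thesis .
qed

lemma ball_bound:
  assumes "finite S"
  shows "real (card {z\<in>Pow S. 4*card z \<le> card S}) * 3 powr (3*real (card S)/4) \<le> 4^card S"
proof -
  define Q where "Q = {z\<in>Pow S. 4*card z \<le> card S}"
  have fP: "finite (Pow S)" using assms by simp
  have QS: "Q \<subseteq> Pow S" by (auto simp: Q_def)
  have "real (card Q) * 3 powr (3*real (card S)/4) = (\<Sum>z\<in>Q. 3 powr (3*real (card S)/4))" by simp
  also have "\<dots> \<le> (\<Sum>z\<in>Q. (3::real)^(card S - card z))"
  proof (rule sum_mono)
    fix z assume "z \<in> Q"
    then have z: "4*card z \<le> card S" by (auto simp: Q_def)
    then have "3*real (card S)/4 \<le> real (card S - card z)" by (simp add: of_nat_diff)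
    then have "3 powr (3*real (card S)/4) \<le> 3 powr real (card S - card z)" by (rule powr_mono) simp
    then show "3 powr (3*real (card S)/4) \<le> (3::real)^(card S - card z)" by (simp add: powr_realpow)
  qed
  also have "\<dots> \<le> (\<Sum>z\<in>Pow S. (3::real)^(card S - card z))"
    by (rule sum_mono2[OF fP QS]) simp
  also have "\<dots> = 4^card S" by (rule weight3[OF assms])
  finally show ?thesis by (simp add: Q_def)
qed




lemma cheb:
  assumes "finite A" "card A \<le> N" "N > 0"
  shows "3/4 * 2^card A \<le> real (card {y\<in>Pow A. (2*real(card y) - real(card A))^2 \<le> 4*real N})"
proof -
  define f where "f = (\<lambda>y::'a set. 2*real(card y) - real(card A))"
  define H where "H = {y\<in>Pow A. (f y)^2 \<le> 4*real N}"
  define Hc where "Hc = Pow A - H"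
  have fP: "finite (Pow A)" using assms by simp
  have HP: "H \<subseteq> Pow A" by (auto simp: H_def)
  have cP: "card (Pow A) = card H + card Hc" unfolding Hc_def using fP HP
    by (metis card_Diff_subset card_mono finite_subset le_add_diff_inverse)
  have "real (card Hc) * (4*real N) = (\<Sum>y\<in>Hc. 4*real N)" by simp
  also have "\<dots> \<le> (\<Sum>y\<in>Hc. (f y)^2)" by (rule sum_mono) (auto simp: Hc_def H_def)
  also have "\<dots> \<le> (\<Sum>y\<in>Pow A. (f y)^2)" by (rule sum_mono2[OF fP]) (auto simp: Hc_def)
  also have "\<dots> = real (card A) * 2^card A" using moment2[OF assms(1)] by (simp add: f_def)
  also have "\<dots> \<le> real N * 2^card A" using assms(2) by simp
  finally have "real (card Hc) * (4*real N) \<le> real N * 2^card A" .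
  then have "real (card Hc) \<le> 2^card A / 4" using assms(3) by (simp add: field_simps)
  moreover have "real (card (Pow A)) = 2^card A" using assms(1) by (simp add: card_Pow)
  ultimately have "3/4 * 2^card A \<le> real (card H)" using cP by simp
  then show ?thesis by (simp add: H_def f_def)
qed

lemma sd_sd: "(u - ((u - z) \<union> (z - u))) \<union> (((u - z) \<union> (z - u)) - u) = z"
  by blast

lemma sd_D:
  assumes "D = (u - v) \<union> (v - u)" "x \<subseteq> D" "y \<inter> D = {}" "w = (u - (x \<union> y)) \<union> ((x \<union> y) - u)"
  shows "(v - w) \<union> (w - v) = (D - x) \<union> y"
  using assms by blast

lemma exp_ineq: "(4::real)^N < 2 powr (7*real N/8) * 3 powr (3*real N/4)" if "N > 0" for N :: nat
proof -
  have "(8::real) powr (3*real N/8) < 9 powr (3*real N/8)" using that by (intro powr_less_mono2) auto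
  moreover have "(8::real) powr (3*real N/8) = 2 powr (9*real N/8)"
  proof -
    have e: "(2::real) powr 3 = 8" by (simp add: powr_numeral)
    have "((2::real) powr 3) powr (3*real N/8) = 2 powr (3 * (3*real N/8))" by (rule powr_powr)
    moreover have "3 * (3*real N/8) = 9*real N/8" by simp
    ultimately show ?thesis by (simp only: e)
  qed
  moreover have "(9::real) powr (3*real N/8) = 3 powr (3*real N/4)"
  proof -
    have e: "(3::real) powr 2 = 9" by (simp add: powr_numeral)
    have "((3::real) powr 2) powr (3*real N/8) = 3 powr (2 * (3*real N/8))" by (rule powr_powr)
    moreover have "2 * (3*real N/8) = 3*real N/4" by simp
    ultimately show ?thesis by (simp only: e)
  qed
  moreover have "(4::real)^N = 2 powr (7*real N/8) * 2 powr (9*real N/8)"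
  proof -
    have a: "(4::real)^N = 4 powr real N" by (simp add: powr_realpow)
    have e: "(2::real) powr 2 = 4" by (simp add: powr_numeral)
    have "((2::real) powr 2) powr (real N) = 2 powr (2 * real N)" by (rule powr_powr)
    then have "(4::real)^N = 2 powr (2*real N)" using a by (simp only: e)
    moreover have "(2::real) powr (7*real N/8) * 2 powr (9*real N/8) = 2 powr (7*real N/8 + 9*real N/8)" by (rule powr_add[symmetric])
    moreover have "7*real N/8 + 9*real N/8 = 2 * real N" by simp
    ultimately show ?thesis by simp
  qed
  ultimately show ?thesis by simp
qed




lemma main_lemma:
  fixes N :: nat and P :: "nat set set set"
  assumes N: "N \<ge> 4096"
    and part: "partition_on (cube N) P"
    and hyp: "\<forall>C\<in>P. \<forall>u\<in>C. \<forall>v\<in>C.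
         real (card {w \<in> cube N. real (hamming u w) \<ge> real N / 2 \<and>
                                  real (hamming v w) \<le> real N / 2 - sqrt (real N)})
           \<le> (3*((3/32)^1024/2)/8) * 2 ^ N"
  shows "real (card P) \<ge> 2 powr (1/8 * real N)"
proof (rule ccontr)
  define \<beta>0 :: real where "\<beta>0 = (3/32)^1024/2"
  have b0: "\<beta>0 > 0" by (simp add: \<beta>0_def)
  assume "\<not> real (card P) \<ge> 2 powr (1/8 * real N)"
  then have lt: "real (card P) < 2 powr (real N/8)" by simp
  have cube: "cube N = Pow {..<N}" by (simp add: cube_def)
  have fcube: "finite (cube N)" by (simp add: cube_def)
  have ccube: "card (cube N) = 2^N" by (simp add: cube_def card_Pow)
  have U: "\<Union>P = cube N" and dis: "disjoint P" and ne: "{} \<notin> P" using part by (auto simp: partition_on_def)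
  have finP: "finite P" proof -
    have "P \<subseteq> Pow (cube N)" using U by blast
    then show ?thesis using fcube by (simp add: finite_subset)
  qed
  have finC: "\<And>C. C \<in> P \<Longrightarrow> finite C" proof -
    fix C assume "C \<in> P"
    then have "C \<subseteq> cube N" using U by blast
    then show "finite C" using fcube by (rule finite_subset)
  qed
  have sumP: "sum card P = 2^N" using card_Union_disjoint[OF dis finC] U ccube by simp
  have Pne: "P \<noteq> {}" using U cube by auto
  have cPpos: "card P > 0" using Pne finP by (simp add: card_gt_0_iff)
  have "\<exists>C\<in>P. real (card C) * real (card P) \<ge> 2^N"
  proof (rule ccontr)
    assume "\<not> (\<exists>C\<in>P. real (card C) * real (card P) \<ge> 2^N)"
    then have a: "\<And>C. C \<in> P \<Longrightarrow> real (card C) * real (card P) < 2^N" by force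
    have "(\<Sum>C\<in>P. real (card C) * real (card P)) < (\<Sum>C\<in>P. 2^N)"
      by (rule sum_strict_mono[OF finP Pne a])
    moreover have "(\<Sum>C\<in>P. real (card C) * real (card P)) = 2^N * real (card P)"
    proof -
      have "real (sum card P) = 2^N" using sumP by simp
      then have "(\<Sum>C\<in>P. real (card C)) = 2^N" by (simp add: of_nat_sum)
      then show ?thesis by (simp add: sum_distrib_right[symmetric])
    qed
    ultimately show False by simp
  qed
  then obtain C where C: "C \<in> P" "real (card C) * real (card P) \<ge> 2^N" by blast
  have "2 powr (7*real N/8) * real (card P) < 2 powr (7*real N/8) * 2 powr (real N/8)"
    using lt by simp
  also have "\<dots> = 2 powr (real N)" by (simp add: powr_add[symmetric])
  also have "\<dots> = 2^N" by (simp add: powr_realpow)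
  finally have X: "2 powr (7*real N/8) * real (card P) < real (card C) * real (card P)" using C(2) by linarith
  have bigC: "real (card C) > 2 powr (7*real N/8)"
    using mult_less_cancel_right_pos[of "real (card P)" "2 powr (7*real N/8)" "real (card C)"] X cPpos by simp
  have CN: "C \<subseteq> cube N" using C(1) U by blast
  have finCC: "finite C" using finC C(1) .
  obtain u where u: "u \<in> C" using C(1) ne by (metis all_not_in_conv)
  have uN: "u \<subseteq> {..<N}" using u CN cube by auto
  have "\<exists>v\<in>C. 4*hamming u v > N"
  proof (rule ccontr)
    assume "\<not> (\<exists>v\<in>C. 4*hamming u v > N)"
    then have small: "\<And>v. v \<in> C \<Longrightarrow> 4*hamming u v \<le> N" by force
    define sdu where "sdu = (\<lambda>w. (u - w) \<union> (w - u))"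
    define Q where "Q = {z\<in>Pow {..<N::nat}. 4*card z \<le> card {..<N}}"
    have inj: "inj_on sdu C" unfolding sdu_def by (rule inj_on_inverseI[where g = "\<lambda>z. (u - z) \<union> (z - u)"]) (rule sd_sd)
    have "sdu ` C \<subseteq> Q"
    proof
      fix z assume "z \<in> sdu ` C"
      then obtain w where w: "w \<in> C" "z = sdu w" by auto
      have "w \<subseteq> {..<N}" using w CN cube by auto
      then show "z \<in> Q" using small[OF w(1)] w(2) uN by (auto simp: Q_def sdu_def hamming_def)
    qed
    moreover have "finite Q"
    proof -
      have "Q \<subseteq> Pow {..<N}" by (auto simp: Q_def)
      then show ?thesis by (rule finite_subset) simp
    qed
    ultimately have "card (sdu ` C) \<le> card Q" by (intro card_mono) auto
    then have "card C \<le> card Q" using card_image[OF inj] by simp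
    then have cq: "real (card C) \<le> real (card Q)" by simp
    have "real (card Q) * 3 powr (3*real N/4) \<le> 4^N" using ball_bound[of "{..<N}"] by (simp add: Q_def)
    also have "\<dots> < 2 powr (7*real N/8) * 3 powr (3*real N/4)" using exp_ineq N by simp
    finally have "real (card Q) < 2 powr (7*real N/8)" by simp
    then show False using cq bigC by simp
  qed
  then obtain v where v: "v \<in> C" "4*hamming u v > N" by blast
  have vN: "v \<subseteq> {..<N}" using v CN cube by auto
  define D where "D = (u - v) \<union> (v - u)"
  define A where "A = {..<N} - D"
  have DN: "D \<subseteq> {..<N}" using uN vN by (auto simp: D_def)
  have fD: "finite D" using DN finite_subset by blast
  have fA: "finite A" by (simp add: A_def)
  have dh: "card D = hamming u v" by (simp add: D_def hamming_def)
  have cA: "card A = N - card D" using DN fD by (simp add: A_def card_Diff_subset)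
  have dN: "card D \<le> N" using DN by (metis card_lessThan card_mono finite_lessThan)
  have d1024: "card D \<ge> 1024" using v(2) N dh by simp
  have dN4: "real N \<le> 4 * real (card D)" using v(2) dh by simp
  define G where "G = {x\<in>Pow D. 2*real(card x) - real(card D) \<ge> 8*sqrt(card D)}"
  define H where "H = {y\<in>Pow A. (2*real(card y) - real(card A))^2 \<le> 4*real N}"
  have cG: "\<beta>0 * 2^card D \<le> real (card G)" using anti[OF fD d1024] by (simp add: G_def \<beta>0_def)
  have cH: "3/4 * 2^card A \<le> real (card H)" using cheb[OF fA _ ] N cA by (simp add: H_def)
  define W where "W = {w \<in> cube N. real (hamming u w) \<ge> real N / 2 \<and> real (hamming v w) \<le> real N / 2 - sqrt (real N)}"
  define \<phi> where "\<phi> = (\<lambda>(x,y). (u - (x \<union> y)) \<union> ((x \<union> y) - u))"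
  have sqN: "sqrt (real N) \<le> 2 * sqrt (real (card D))"
  proof -
    have "sqrt (real N) \<le> sqrt (4 * real (card D))" using dN4 by (rule real_sqrt_le_mono)
    then show ?thesis by (simp add: real_sqrt_mult)
  qed
  have inj: "inj_on \<phi> (G \<times> H)"
  proof (rule inj_onI)
    fix p q assume p: "p \<in> G \<times> H" and q: "q \<in> G \<times> H" and e: "\<phi> p = \<phi> q"
    obtain x y where pq: "p = (x,y)" by force
    obtain x' y' where qq: "q = (x',y')" by force
    have s: "x \<subseteq> D" "y \<subseteq> A" "x' \<subseteq> D" "y' \<subseteq> A" using p q pq qq by (auto simp: G_def H_def)
    have "(u - \<phi> p) \<union> (\<phi> p - u) = x \<union> y" using pq by (simp add: \<phi>_def sd_sd)
    moreover have "(u - \<phi> q) \<union> (\<phi> q - u) = x' \<union> y'" using qq by (simp add: \<phi>_def sd_sd)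
    ultimately have e': "x \<union> y = x' \<union> y'" using e by simp
    have "x = x'" "y = y'" using e' s by (auto simp: A_def)
    then show "p = q" using pq qq by simp
  qed
  have sub: "\<phi> ` (G \<times> H) \<subseteq> W"
  proof
    fix w assume "w \<in> \<phi> ` (G \<times> H)"
    then obtain x y where xy: "x \<in> G" "y \<in> H" "w = (u - (x \<union> y)) \<union> ((x \<union> y) - u)" by (auto simp: \<phi>_def)
    have xD: "x \<subseteq> D" and yA: "y \<subseteq> A" using xy by (auto simp: G_def H_def)
    have fx: "finite x" using xD fD finite_subset by blast
    have fy: "finite y" using yA fA finite_subset by blast
    have yD: "y \<inter> D = {}" using yA by (auto simp: A_def)
    have wN: "w \<in> cube N" using xy(3) uN xD yA DN by (auto simp: cube A_def)
    have hu: "hamming u w = card x + card y"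
    proof -
      have "hamming u w = card (x \<union> y)" unfolding hamming_def xy(3) sd_sd ..
      also have "\<dots> = card x + card y" using fx fy xD yD by (intro card_Un_disjoint) auto
      finally show ?thesis .
    qed
    have hv: "real (hamming v w) = real (card D) - real (card x) + real (card y)"
    proof -
      have "hamming v w = card ((D - x) \<union> y)" unfolding hamming_def using sd_D[OF D_def xD yD xy(3)] by simp
      also have "\<dots> = card (D - x) + card y" using fD fy yD by (intro card_Un_disjoint) auto
      finally have "hamming v w = card (D - x) + card y" .
      moreover have "card (D - x) = card D - card x" using fx xD by (simp add: card_Diff_subset)
      moreover have "card x \<le> card D" using xD fD by (simp add: card_mono)
      ultimately show ?thesis by (simp add: of_nat_diff)
    qed
    have gx: "2*real(card x) - real(card D) \<ge> 8*sqrt(card D)" using xy(1) by (simp add: G_def)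
    have hy0: "(2*real(card y) - real(card A))^2 \<le> 4*real N" using xy(2) by (simp add: H_def)
    have hy: "\<bar>2*real(card y) - real(card A)\<bar> \<le> 2*sqrt (real N)"
    proof -
      have "sqrt ((2*real(card y) - real(card A))^2) \<le> sqrt (4*real N)" using hy0 by (rule real_sqrt_le_mono)
      then show ?thesis by (simp add: real_sqrt_mult)
    qed
    have eA: "real (card A) = real N - real (card D)" using cA dN by (simp add: of_nat_diff)
    have "real (hamming u w) \<ge> real N / 2" using hu gx hy eA sqN by (simp add: abs_le_iff)
    moreover have "real (hamming v w) \<le> real N / 2 - sqrt (real N)" using hv gx hy eA sqN unfolding abs_le_iff by linarith
    ultimately show "w \<in> W" using wN by (simp add: W_def)
  qed
  have fW: "finite W" using fcube by (simp add: W_def)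
  have "card G * card H = card (\<phi> ` (G \<times> H))" using card_image[OF inj] by (simp add: card_cartesian_product)
  also have "\<dots> \<le> card W" by (rule card_mono[OF fW sub])
  finally have GH: "real (card G) * real (card H) \<le> real (card W)" by (metis of_nat_le_iff of_nat_mult)
  have "(\<beta>0 * 2^card D) * (3/4 * 2^card A) \<le> real (card G) * real (card H)"
    by (rule mult_mono) (use cG cH b0 in auto)
  moreover have "(\<beta>0 * 2^card D) * (3/4 * 2^card A) = 3/4 * \<beta>0 * 2^N"
  proof -
    have "card D + card A = N" using cA dN by simp
    then have "(2::real)^card D * 2^card A = 2^N" by (metis power_add)
    then show ?thesis by (simp add: algebra_simps)
  qed
  moreover have "real (card W) \<le> (3*\<beta>0/8) * 2 ^ N" using hyp C(1) u v(1) by (simp add: W_def \<beta>0_def)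
  ultimately have "3/4 * \<beta>0 * 2^N \<le> (3*\<beta>0/8) * 2 ^ N" using GH by linarith
  then show False using b0 by simp
qed


theorem lemma5p7:
  shows "\<exists>\<eta>::real. \<eta> > 0 \<and> (\<exists>c::real. c > 0 \<and> (\<exists>N0::nat. \<forall>N\<ge>N0. \<forall>P.
     (partition_on (cube N) P \<and>
      (\<forall>C\<in>P. \<forall>u\<in>C. \<forall>v\<in>C.
         real (card {w \<in> cube N. real (hamming u w) \<ge> real N / 2 \<and>
                                  real (hamming v w) \<le> real N / 2 - sqrt (real N)})
           \<le> \<eta> * 2 ^ N))
     \<longrightarrow> real (card P) \<ge> 2 powr (c * real N)))"
proof -
  have pos: "(3*((3/32)^1024/2)/8::real) > 0" by simp
  show ?thesis
    apply (rule exI[where x="3*((3/32)^1024/2)/8"])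
    apply (rule conjI[OF pos])
    apply (rule exI[where x="1/8"])
    apply (rule conjI, simp)
    apply (rule exI[where x="4096"])
    using main_lemma by blast
qed

end
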